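(* Let $r>1$, let $x_0,y_0$ be positive integers and let $\{(X_t,Y_t)\}_{t\ge 0}$ be the CA competition process with fitness ratio $r$ started at $(x_0,y_0)$. Let $N=\sum_{t=0}^\infty \mathbf{1}\{X_t=Y_t\}$ be the total number of ties. Then for every positive integer $n$, \[ \mathbb{P}[N\ge n]\le C\left(\frac{2}{1+r}\right)^{n-1}, \] where $C=1$ if $x_0\le y_0$, and \[ C=\frac{(y_0)_{x_0-y_0}}{(rx_0+y_0)_{x_0-y_0}}\left(1+\frac1r\right)^{x_0-y_0}\quad\text{if } x_0>y_0. \]
   Context: The CA competition process with fitness ratio $r\ge 1$ started at $(x_0,y_0)$ is the discrete-time Markov chain $\{(X_t,Y_t)\}_{t\ge0}$ on $\{(x,y)\in\mathbb{Z}^2: x\ge1,y\ge1\}$ with $(X_0,Y_0)=(x_0,y_0)$ and transition probabilities: from $(x,y)$ it moves to $(x+1,y)$ with probability $\frac{rx}{rx+y}$ and to $(x,y+1)$ with probability $\frac{y}{rx+y}$. $(x)_k=\prod_{i=0}^{k-1}(x+i)$ denotes the Pochhammer symbol (with $(x)_0=1$). *)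

theory Defs
  imports "HOL-Probability.Probability"
begin

text \<open>Realisation of the CA competition process with fitness ratio r started at (x0,y0):
  it is driven by an i.i.d. sequence of Uniform(0,1) random variables U_0, U_1, ...;
  at step t the process moves from (x,y) to (x+1,y) if U_t < r x/(r x + y) and to
  (x,y+1) otherwise. This gives exactly the stated transition probabilities.\<close>

definition ca_step :: "real \<Rightarrow> nat \<times> nat \<Rightarrow> real \<Rightarrow> nat \<times> nat" where
  "ca_step r s u = (let x = fst s; y = snd s in
     if u < r * real x / (r * real x + real y) then (x + 1, y) else (x, y + 1))"

fun ca_state :: "real \<Rightarrow> nat \<Rightarrow> nat \<Rightarrow> real stream \<Rightarrow> nat \<Rightarrow> nat \<times> nat" where
  "ca_state r x0 y0 \<omega> 0 = (x0, y0)"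
| "ca_state r x0 y0 \<omega> (Suc t) = ca_step r (ca_state r x0 y0 \<omega> t) (\<omega> !! t)"

definition ca_space :: "real stream measure" where
  "ca_space = stream_space (uniform_measure lborel {0<..<1::real})"

definition ca_X :: "real \<Rightarrow> nat \<Rightarrow> nat \<Rightarrow> real stream \<Rightarrow> nat \<Rightarrow> nat" where
  "ca_X r x0 y0 \<omega> t = fst (ca_state r x0 y0 \<omega> t)"

definition ca_Y :: "real \<Rightarrow> nat \<Rightarrow> nat \<Rightarrow> real stream \<Rightarrow> nat \<Rightarrow> nat" where
  "ca_Y r x0 y0 \<omega> t = snd (ca_state r x0 y0 \<omega> t)"

definition num_ties :: "real \<Rightarrow> nat \<Rightarrow> nat \<Rightarrow> real stream \<Rightarrow> enat" where
  "num_ties r x0 y0 \<omega> =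
     (let S = {t. ca_X r x0 y0 \<omega> t = ca_Y r x0 y0 \<omega> t} in
      if finite S then enat (card S) else \<infinity>)"

end

theory Submission
  imports Defs
begin
abbreviation "UM \<equiv> uniform_measure lborel {0<..<1::real}"

lemma prob_UM: "prob_space UM"
  by (rule prob_space_uniform_measure) auto

lemma meas_state: "(\<lambda>\<omega>. ca_state r x y \<omega> t) \<in> measurable (stream_space UM) (count_space UNIV)"
proof (induction t)
  case 0 then show ?case by simp
next
  case (Suc t)
  have "(\<lambda>\<omega>. ca_step r s (\<omega> !! t)) \<in> measurable (stream_space UM) (count_space UNIV)" for s
    unfolding ca_step_def Let_def by measurable
  then show ?case using Suc
    by (simp add: measurable_compose_countable[where f="\<lambda>s \<omega>. ca_step r s (\<omega> !! t)"])
qed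

definition cnt :: "real \<Rightarrow> nat \<Rightarrow> nat \<Rightarrow> nat \<Rightarrow> real stream \<Rightarrow> nat" where
  "cnt r x y T \<omega> = (\<Sum>t<T. if ca_X r x y \<omega> t = ca_Y r x y \<omega> t then 1 else 0)"

lemma meas_cnt: "(\<lambda>\<omega>. cnt r x y T \<omega>) \<in> measurable (stream_space UM) (count_space UNIV)"
proof (induction T)
  case 0 then show ?case by (simp add: cnt_def)
next
  case (Suc T)
  have e: "cnt r x y (Suc T) \<omega> = cnt r x y T \<omega> + (\<lambda>s. if fst s = snd s then 1 else 0) (ca_state r x y \<omega> T)" for \<omega>
    by (simp add: cnt_def ca_X_def ca_Y_def)
  have "(\<lambda>\<omega>. a + (\<lambda>s. if fst s = snd s then 1 else 0) (ca_state r x y \<omega> T)) \<in> measurable (stream_space UM) (count_space UNIV)" for a :: nat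
    by (rule measurable_compose[OF meas_state, where g="\<lambda>s. a + (if fst s = snd s then 1 else 0)"]) simp
  then show ?case unfolding e using Suc
    by (simp add: measurable_compose_countable[where f="\<lambda>a \<omega>. a + (\<lambda>s. if fst s = snd s then 1 else 0) (ca_state r x y \<omega> T)"])
qed
lemma state_shift: "ca_state r x y (u ## \<omega>) (Suc t) = ca_state r (fst (ca_step r (x,y) u)) (snd (ca_step r (x,y) u)) \<omega> t"
  by (induction t) auto

lemma cnt_shift: "cnt r x y (Suc T) (u ## \<omega>) = (if x = y then 1 else 0) + cnt r (fst (ca_step r (x,y) u)) (snd (ca_step r (x,y) u)) T \<omega>"
  unfolding cnt_def ca_X_def ca_Y_def
  by (simp only: sum.lessThan_Suc_shift state_shift) simp

lemma int2:
  assumes "0 < p" "p < 1" "0 \<le> a" "0 \<le> b"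
  shows "(\<integral>\<^sup>+u. ennreal (if u < p then a else b) \<partial>UM) = ennreal (p * a + (1 - p) * b)"
proof -
  have e: "(\<lambda>u. ennreal (if u < p then a else b)) = (\<lambda>u. ennreal a * indicator {..<p} u + ennreal b * indicator {p..} u)"
    by (auto simp: indicator_def fun_eq_iff)
  have m1: "emeasure UM {..<p} = ennreal p"
  proof -
    have "{0<..<1::real} \<inter> {..<p} = {0<..<p}" using assms by auto
    then show ?thesis using assms by (simp add: divide_ennreal_def)
  qed
  have m2: "emeasure UM {p..} = ennreal (1 - p)"
  proof -
    have "{0<..<1::real} \<inter> {p..} = {p..<1}" using assms by auto
    then show ?thesis using assms by (simp add: divide_ennreal_def)
  qed
  show ?thesis unfolding e
    using assms
    by (simp add: nn_integral_add nn_integral_cmult_indicator m1 m2 ennreal_mult'[symmetric] ennreal_plus[symmetric] mult.commute del: ennreal_plus)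
qed

lemma emeas_rec:
  "emeasure (stream_space UM) {\<omega>\<in>space (stream_space UM). k \<le> cnt r x y (Suc T) \<omega>}
   = (\<integral>\<^sup>+u. emeasure (stream_space UM) {\<omega>\<in>space (stream_space UM).
        k - (if x = y then 1 else 0) \<le> cnt r (fst (ca_step r (x,y) u)) (snd (ca_step r (x,y) u)) T \<omega>} \<partial>UM)"
proof -
  have ms: "{\<omega>\<in>space (stream_space UM). k \<le> cnt r x y (Suc T) \<omega>} \<in> sets (stream_space UM)"
    using meas_cnt[of r x y "Suc T"] by measurable
  show ?thesis
    apply (subst prob_space.emeasure_stream_space[OF prob_UM ms])
    apply (rule nn_integral_cong)
    apply (rule arg_cong[where f="emeasure (stream_space UM)"])
    apply (auto simp: space_stream_space cnt_shift)
    done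
qed
definition H :: "real \<Rightarrow> nat \<Rightarrow> nat \<Rightarrow> real" where
  "H r x0 y0 = (if x0 \<le> y0 then 1
        else pochhammer (real y0) (x0 - y0) / pochhammer (r * real x0 + real y0) (x0 - y0)
             * (1 + 1 / r) ^ (x0 - y0))"

definition Bd :: "real \<Rightarrow> nat \<Rightarrow> nat \<Rightarrow> nat \<Rightarrow> real" where
  "Bd r k x y = (if k = 0 then 1 else H r x y * (2 / (1 + r)) ^ (k - 1))"

lemma H_nonneg: "r > 0 \<Longrightarrow> y > 0 \<Longrightarrow> H r x y \<ge> 0"
proof -
  assume r: "r > 0" and yp: "y > 0"
  have "pochhammer (real y) d \<ge> 0" for d by (rule pochhammer_nonneg) (use yp in simp)
  moreover have "pochhammer (r * real x + real y) d \<ge> 0" for d by (rule pochhammer_nonneg) (use r yp in \<open>simp add: add_nonneg_pos\<close>)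
  ultimately show ?thesis unfolding H_def using r by simp
qed

lemma Bd_nonneg: "r > 0 \<Longrightarrow> y > 0 \<Longrightarrow> Bd r k x y \<ge> 0"
  unfolding Bd_def using H_nonneg by auto

lemma core:
  fixes a r P Q Q' X b c m :: real
  assumes a: "a > 0" and r: "r > 1" and Q: "Q > 0" and QQ: "Q \<le> Q'" and P: "P > 0" and m: "m \<ge> 0"
    and X: "X = a + 1 + m" and b: "b = r * X + a" and c: "c = 1 + 1 / r"
  shows "(r*X/b) * (a*P*X/(Q'*((b+r+m)*(b+r+m+1))) * c^2) + (a/b)*(P/Q) \<le> a*P/(b*Q)*c"
proof -
  define E where "E = (b+r+m)*(b+r+m+1)"
  have Xp: "X > 0" using X a m by simp
  have rc: "r * c = r + 1" using c r by (simp add: field_simps)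
  have ge: "b + r + m \<ge> (r+1) * X" using X b r a m by (simp add: algebra_simps)
  have ge1: "b + r + m + 1 \<ge> (r+1) * X" using ge by simp
  have t1: "(r*c)^2 * X^2 \<le> E"
  proof -
    have "(r*c)^2 * X^2 = ((r+1)*X) * ((r+1)*X)" by (simp add: rc power2_eq_square)
    also have "\<dots> \<le> (b+r+m)*(b+r+m+1)"
    proof (rule mult_mono)
      have "0 \<le> (r+1)*X" using Xp r by simp
      then show "0 \<le> b + r + m" using ge by linarith
    qed (use ge ge1 Xp r in auto)
    finally show ?thesis unfolding E_def .
  qed
  have Ep: "E > 0" using t1 Xp r c
    by (smt (verit, del_insts) mult_pos_pos zero_less_power rc)
  have Q'p: "Q' > 0" using Q QQ by simp
  have t2: "r*X*X*c^2/(Q'*E) \<le> 1/(r*Q)"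
  proof -
    have "r*X*X*c^2/(Q'*E) \<le> r*X*X*c^2/(Q*E)"
      using Q QQ Ep Xp r by (intro divide_left_mono mult_right_mono mult_pos_pos) auto
    also have "\<dots> \<le> 1/(r*Q)"
      using t1 Q Ep r by (simp add: divide_simps power2_eq_square algebra_simps)
    finally show ?thesis .
  qed
  have bp: "b > 0" using b r Xp a by (simp add: add_pos_pos)
  have k: "a*P/b > 0" using a P bp by simp
  have "(r*X/b) * (a*P*X/(Q'*E) * c^2) + (a/b)*(P/Q) = (a*P/b) * (r*X*X*c^2/(Q'*E)) + (a*P/b) * (1/Q)"
    by (simp add: field_simps)
  also have "\<dots> \<le> (a*P/b) * (1/(r*Q)) + (a*P/b) * (1/Q)"
    using t2 k by (intro add_right_mono mult_left_mono) auto
  also have "\<dots> = a*P/(b*Q)*c" using r Q bp c by (simp add: field_simps)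
  finally show ?thesis unfolding E_def .
qed
lemma poch_mono: fixes u v :: real assumes "0 < u" "u \<le> v" shows "pochhammer u m \<le> pochhammer v m"
proof (induction m)
  case 0 then show ?case by simp
next
  case (Suc m)
  have "pochhammer u m * (u + m) \<le> pochhammer v m * (v + m)"
    using Suc assms by (intro mult_mono) (auto intro: pochhammer_nonneg)
  then show ?case by (simp add: pochhammer_Suc)
qed

lemma H_ge: "y \<le> x \<Longrightarrow> H r x y = pochhammer (real y) (x - y) / pochhammer (r * real x + real y) (x - y)
             * (1 + 1 / r) ^ (x - y)"
  unfolding H_def by auto

lemma h_ineq:
  assumes r: "r > 1" and y: "y \<ge> 1" and x: "x = y + Suc m"
  shows "r * real x / (r * real x + real y) * H r (x+1) y
       + (1 - r * real x / (r * real x + real y)) * H r x (y+1) \<le> H r x y"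
proof -
  define a where "a = real y"
  define X where "X = real x"
  define b where "b = r * X + a"
  define c where "c = 1 + 1 / r"
  define P where "P = pochhammer (a+1) m"
  define Q where "Q = pochhammer (b+1) m"
  define Q' where "Q' = pochhammer (b+r) m"
  have ap: "a > 0" using y unfolding a_def by simp
  have Xe: "X = a + 1 + real m" unfolding X_def a_def x by simp
  have Xp: "X > 0" using Xe ap by simp
  have bp: "b > 0" unfolding b_def using r Xp ap by (simp add: add_pos_pos)
  have Pp: "P > 0" unfolding P_def using ap by (intro pochhammer_pos) simp
  have Qp: "Q > 0" unfolding Q_def using bp by (intro pochhammer_pos) simp
  have QQ: "Q \<le> Q'" unfolding Q_def Q'_def using bp r by (intro poch_mono) auto
  have h0: "H r x y = a*P/(b*Q) * c * c^m"
    using H_ge[of y x r] x unfolding a_def X_def b_def c_def P_def Q_def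
    by (simp add: pochhammer_rec)
  have h1: "H r x (y+1) = P/Q * c^m"
    using H_ge[of "y+1" x r] x unfolding a_def X_def b_def c_def P_def Q_def
    by (simp add: add.assoc add.commute)
  have h2: "H r (x+1) y = a*P*X/(Q'*((b+r+m)*(b+r+m+1))) * c^2 * c^m"
  proof -
    have d: "x + 1 - y = Suc (Suc m)" using x by simp
    have e1: "pochhammer a (Suc (Suc m)) = a * P * X"
      unfolding P_def Xe by (simp only: pochhammer_rec[of a "Suc m"] pochhammer_Suc[of "a+1" m] mult.assoc add.assoc)
    have e2: "r * real (x+1) + a = b + r" unfolding b_def X_def a_def by (simp add: algebra_simps)
    have e3: "pochhammer (b + r) (Suc (Suc m)) = Q' * ((b+r+m)*(b+r+m+1))"
      unfolding Q'_def by (simp add: pochhammer_Suc algebra_simps)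
    have le: "y \<le> x+1" using x by simp
    have "H r (x+1) y = pochhammer a (Suc (Suc m)) / pochhammer (b + r) (Suc (Suc m)) * c ^ (Suc (Suc m))"
      using H_ge[OF le, of r] unfolding d a_def[symmetric] e2 c_def[symmetric] .
    then show ?thesis unfolding e1 e3 by (simp add: power2_eq_square)
  qed
  have core': "(r*X/b) * (a*P*X/(Q'*((b+r+m)*(b+r+m+1))) * c^2) + (a/b)*(P/Q) \<le> a*P/(b*Q)*c"
    by (rule core[OF ap r Qp QQ Pp _ Xe b_def c_def]) simp
  have pe: "r * real x / (r * real x + real y) = r*X/b" unfolding b_def X_def a_def ..
  have qe: "1 - r*X/b = a/b" using bp unfolding b_def by (simp add: field_simps)
  have cm: "c^m \<ge> 0" unfolding c_def using r by simp
  show ?thesis unfolding pe qe h0 h1 h2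
    using mult_right_mono[OF core' cm] by (simp add: algebra_simps)
qed
lemma diag_ineq:
  assumes r: "r > 1" and x: "x \<ge> 1"
  shows "r * real x / (r * real x + real x) * H r (x+1) x + (1 - r * real x / (r * real x + real x)) \<le> 2 / (1 + r)"
proof -
  have xp: "real x > 0" using x by simp
  have h: "H r (x+1) x = real x / (r * real (x+1) + real x) * (1 + 1/r)"
    unfolding H_def by simp
  have p: "r * real x / (r * real x + real x) = r / (r + 1)"
  proof -
    have "r * real x + real x = (r+1) * real x" by (simp add: algebra_simps)
    then show ?thesis using xp by simp
  qed
  have d: "r * real (x+1) + real x > 0" using xp r by (simp add: add_pos_pos)
  have rc: "r / (r+1) * (1 + 1/r) = 1"
  proof -
    have rr: "r * r > 0" using r by simp
    have "r + 1 \<noteq> 0" "r \<noteq> 0" "r + r * r \<noteq> 0" using r rr by linarith+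
    then show ?thesis by (simp add: field_simps)
  qed
  have "r / (r+1) * (real x / (r * real (x+1) + real x) * (1 + 1/r)) = real x / (r * real (x+1) + real x) * (r / (r+1) * (1 + 1/r))"
    by (simp only: ac_simps)
  also have "\<dots> = real x / (r * real (x+1) + real x)" unfolding rc by simp
  also have "\<dots> \<le> 1 / (1 + r)"
    using d r xp by (simp add: divide_simps algebra_simps)
  finally have "r / (r+1) * (real x / (r * real (x+1) + real x) * (1 + 1/r)) \<le> 1 / (1 + r)" .
  moreover have "1 - r / (r+1) = 1 / (1 + r)" using r by (simp add: field_simps)
  ultimately show ?thesis unfolding h p by (simp add: add_divide_distrib[symmetric] add.commute)
qed

lemma key:
  assumes r: "r > 1" and x: "x \<ge> 1" and y: "y \<ge> 1" and k: "k \<ge> 1"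
  shows "r * real x / (r * real x + real y) * Bd r (k - (if x = y then 1 else 0)) (x+1) y
       + (1 - r * real x / (r * real x + real y)) * Bd r (k - (if x = y then 1 else 0)) x (y+1) \<le> Bd r k x y"
proof -
  define p where "p = r * real x / (r * real x + real y)"
  define q where "q = 2 / (1 + r)"
  have qp: "q \<ge> 0" unfolding q_def using r by simp
  have lin: "p * (A * Z) + (1 - p) * (B * Z) = (p * A + (1 - p) * B) * Z" for A B Z :: real
    by (simp add: algebra_simps)
  have kk: "k \<noteq> 0" using k by simp
  consider "x < y" | "x = y" | "x > y" by linarith
  then show ?thesis
  proof cases
    case 1
    have H1: "H r (x+1) y = 1" "H r x (y+1) = 1" "H r x y = 1" using 1 by (simp_all add: H_def)
    have "Bd r k (x+1) y = q^(k-1)" "Bd r k x (y+1) = q^(k-1)" "Bd r k x y = q^(k-1)"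
      unfolding Bd_def q_def using kk H1 by simp_all
    moreover have "p * Z + (1 - p) * Z = Z" for Z :: real by (simp add: algebra_simps)
    ultimately show ?thesis using 1 unfolding p_def[symmetric] by simp
  next
    case 2
    show ?thesis
    proof (cases "k = 1")
      case True
      have "Bd r k x y = 1" unfolding Bd_def using True 2 by (simp add: H_def)
      moreover have "Bd r 0 a b = 1" for a b unfolding Bd_def by simp
      moreover have "p * 1 + (1 - p) * 1 = (1::real)" by simp
      ultimately show ?thesis using True 2 unfolding p_def[symmetric] by simp
    next
      case False
      define j where "j = k - 2"
      have j: "k = Suc (Suc j)" using k False unfolding j_def by simp
      have "p * H r (x+1) y + (1 - p) \<le> q"
        using diag_ineq[OF r x] 2 unfolding p_def q_def by simp
      then have "(p * H r (x+1) y + (1 - p)) * q^j \<le> q * q^j"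
        using qp by (intro mult_right_mono) auto
      moreover have "Bd r (Suc j) (x+1) y = H r (x+1) y * q^j" unfolding Bd_def q_def by simp
      moreover have "Bd r (Suc j) x (y+1) = q^j" using 2 unfolding Bd_def q_def by (simp add: H_def)
      moreover have "Bd r k x y = q * q^j" using 2 j unfolding Bd_def q_def by (simp add: H_def)
      moreover have "p * (A * Z) + (1 - p) * Z = (p * A + (1 - p)) * Z" for A Z :: real
        by (simp add: algebra_simps)
      ultimately show ?thesis using 2 j unfolding p_def[symmetric] by simp
    qed
  next
    case 3
    define m where "m = x - y - 1"
    have m: "x = y + Suc m" using 3 unfolding m_def by simp
    have "p * H r (x+1) y + (1 - p) * H r x (y+1) \<le> H r x y"
      using h_ineq[OF r y m] unfolding p_def .
    then have "(p * H r (x+1) y + (1 - p) * H r x (y+1)) * q^(k-1) \<le> H r x y * q^(k-1)"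
      using qp by (intro mult_right_mono) auto
    moreover have "Bd r k a b = H r a b * q^(k-1)" for a b unfolding Bd_def q_def using kk by simp
    ultimately show ?thesis using 3 unfolding p_def[symmetric] by (simp add: lin)
  qed
qed

lemma bound:
  assumes "r > 1"
  shows "x \<ge> 1 \<Longrightarrow> y \<ge> 1 \<Longrightarrow> emeasure (stream_space UM) {\<omega>\<in>space (stream_space UM). k \<le> cnt r x y T \<omega>} \<le> ennreal (Bd r k x y)"
proof (induction T arbitrary: k x y)
  case 0
  then show ?case by (cases "k = 0") (auto simp: cnt_def Bd_def prob_space.emeasure_space_1[OF prob_space.prob_space_stream_space[OF prob_UM]])
next
  case (Suc T)
  interpret S: prob_space "stream_space UM" by (rule prob_space.prob_space_stream_space[OF prob_UM])
  show ?case
  proof (cases "k = 0")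
    case True
    then show ?thesis using S.emeasure_space_1 by (simp add: Bd_def)
  next
    case False
    define p where "p = r * real x / (r * real x + real y)"
    define k' where "k' = k - (if x = y then 1 else 0)"
    have xp: "real x > 0" "real y > 0" using Suc.prems by auto
    have rxp: "r * real x > 0" using xp assms by simp
    have p01: "0 < p" "p < 1" unfolding p_def using rxp xp by (auto simp: field_simps)
    have st: "ca_step r (x,y) u = (if u < p then (x+1, y) else (x, y+1))" for u
      unfolding ca_step_def p_def by simp
    have "emeasure (stream_space UM) {\<omega>\<in>space (stream_space UM). k \<le> cnt r x y (Suc T) \<omega>}
       = (\<integral>\<^sup>+u. emeasure (stream_space UM) {\<omega>\<in>space (stream_space UM).
        k' \<le> cnt r (fst (ca_step r (x,y) u)) (snd (ca_step r (x,y) u)) T \<omega>} \<partial>UM)"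
      unfolding k'_def by (rule emeas_rec)
    also have "\<dots> \<le> (\<integral>\<^sup>+u. ennreal (if u < p then Bd r k' (x+1) y else Bd r k' x (y+1)) \<partial>UM)"
      apply (rule nn_integral_mono)
      using Suc.IH Suc.prems by (auto simp: st)
    also have "\<dots> = ennreal (p * Bd r k' (x+1) y + (1 - p) * Bd r k' x (y+1))"
      using p01 Bd_nonneg[of r y] Bd_nonneg[of r "y+1"] assms xp by (intro int2) auto
    also have "\<dots> \<le> ennreal (Bd r k x y)"
      using key[of r x y k] Suc.prems assms False unfolding p_def k'_def by (auto intro: ennreal_leI)
    finally show ?thesis .
  qed
qed
lemma cnt_card: "cnt r x y T \<omega> = card ({t. ca_X r x y \<omega> t = ca_Y r x y \<omega> t} \<inter> {..<T})"
proof -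
  have "cnt r x y T \<omega> = card {t\<in>{..<T}. ca_X r x y \<omega> t = ca_Y r x y \<omega> t}"
    unfolding cnt_def by (simp add: sum.If_cases Int_def conj_commute)
  also have "{t\<in>{..<T}. ca_X r x y \<omega> t = ca_Y r x y \<omega> t} = {t. ca_X r x y \<omega> t = ca_Y r x y \<omega> t} \<inter> {..<T}" by auto
  finally show ?thesis .
qed

lemma ties_iff: "enat n \<le> num_ties r x y \<omega> \<longleftrightarrow> (\<exists>T. n \<le> cnt r x y T \<omega>)"
proof -
  define S where "S = {t. ca_X r x y \<omega> t = ca_Y r x y \<omega> t}"
  have c: "cnt r x y T \<omega> = card (S \<inter> {..<T})" for T unfolding S_def by (rule cnt_card)
  show ?thesis
  proof (cases "finite S")
    case True
    then obtain T0 where T0: "S \<subseteq> {..<T0}" using finite_nat_bounded by blast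
    have nt: "num_ties r x y \<omega> = enat (card S)" unfolding num_ties_def S_def[symmetric] using True by simp
    show ?thesis
    proof
      assume "enat n \<le> num_ties r x y \<omega>"
      then have "n \<le> card S" using nt by simp
      moreover have "S \<inter> {..<T0} = S" using T0 by auto
      ultimately show "\<exists>T. n \<le> cnt r x y T \<omega>" using c by metis
    next
      assume "\<exists>T. n \<le> cnt r x y T \<omega>"
      then obtain T where "n \<le> card (S \<inter> {..<T})" using c by metis
      also have "\<dots> \<le> card S" using True by (simp add: card_mono)
      finally show "enat n \<le> num_ties r x y \<omega>" using nt by simp
    qed
  next
    case False
    have nt: "num_ties r x y \<omega> = \<infinity>" unfolding num_ties_def S_def[symmetric] using False by simp
    obtain B where B: "B \<subseteq> S" "finite B" "card B = n" using infinite_arbitrarily_large[OF False] by blast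
    then obtain T where T: "B \<subseteq> {..<T}" using finite_nat_bounded by blast
    have "n \<le> card (S \<inter> {..<T})" using B T by (metis Int_greatest card_mono finite_Int finite_lessThan)
    then show ?thesis using nt c by auto
  qed
qed

theorem theorem4:
  fixes r :: real and x0 y0 n :: nat
  assumes "r > 1" and "x0 \<ge> 1" and "y0 \<ge> 1" and "n \<ge> 1"
  shows "measure ca_space {\<omega> \<in> space ca_space. enat n \<le> num_ties r x0 y0 \<omega>}
    \<le> (if x0 \<le> y0 then 1
        else pochhammer (real y0) (x0 - y0) / pochhammer (r * real x0 + real y0) (x0 - y0)
             * (1 + 1 / r) ^ (x0 - y0))
      * (2 / (1 + r)) ^ (n - 1)"
proof -
  interpret S: prob_space "stream_space UM" by (rule prob_space.prob_space_stream_space[OF prob_UM])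
  define A where "A T = {\<omega>\<in>space (stream_space UM). n \<le> cnt r x0 y0 T \<omega>}" for T
  have Asets: "A T \<in> sets (stream_space UM)" for T
    unfolding A_def using meas_cnt[of r x0 y0 T] by measurable
  have inc: "incseq A"
  proof (rule incseq_SucI)
    fix T show "A T \<subseteq> A (Suc T)" unfolding A_def cnt_def by auto
  qed
  have eqU: "{\<omega> \<in> space ca_space. enat n \<le> num_ties r x0 y0 \<omega>} = (\<Union>T. A T)"
    unfolding ca_space_def A_def using ties_iff by auto
  have "emeasure (stream_space UM) (\<Union>T. A T) = (SUP T. emeasure (stream_space UM) (A T))"
    using Asets inc by (intro SUP_emeasure_incseq[symmetric]) auto
  also have "\<dots> \<le> ennreal (Bd r n x0 y0)"
    unfolding A_def using bound[OF assms(1)] assms by (intro SUP_least) auto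
  finally have "emeasure (stream_space UM) (\<Union>T. A T) \<le> ennreal (Bd r n x0 y0)" .
  then have "measure (stream_space UM) (\<Union>T. A T) \<le> Bd r n x0 y0"
    using Bd_nonneg[of r y0 n x0] assms by (simp add: S.emeasure_eq_measure)
  then show ?thesis unfolding eqU ca_space_def[symmetric] Bd_def H_def using assms by simp
qed
end
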